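(* Let $n\ge1$, $r\ge1$ and $\underline{m}=(m_0,\dots,m_n)$ positive integers. For each $i\in\{0,\dots,n\}$ and each $k\in S_i$ there is a path from $v_0^0$ to $v_i^k$ in the graph $\overline{L}_{2n+1}^{r;\underline{m}}$.
   Context: A path in a directed graph is a finite nonempty sequence $e_1\cdots e_k$ of edges with $r(e_i)=s(e_{i+1})$, from $s(e_1)$ to $r(e_k)$. $\Lambda=L_{2n+1}\times_c\mathbb{Z}_r$ is the graph with vertices $(v_i,k)$, $0\le i\le n$, $k\in\mathbb{Z}_r$, and edges $(e_{ij},k)$, $0\le i\le j\le n$, $k\in\mathbb{Z}_r$, with source $(v_i,k-m_i\bmod r)$ and range $(v_j,k)$. A path from $(v_i,s)$ to $(v_j,t)$ is admissible if none of the vertices it passes through other than its source and range lies in $\{(v_\ell,k): i\le\ell\le j,\ 0\le k\le\gcd(m_\ell,r)-1\}$; $n_{ij}^{st}$ is the number of such paths. $H$ is the smallest hereditary subset of $\Lambda^0$ (closed under following paths) containing all $(v_i,0)$, and $S_i=\{k\in\{0,\dots,\gcd(m_i,r)-1\}:(v_i,k)\in H\}$. The graph $\overline{L}_{2n+1}^{r;\underline{m}}$ has vertices $v_i^k$ ($k\in S_i$) and edges $e_{ij;a}^{st}$ ($0\le i\le j\le n$, $s\in S_i$, $t\in S_j$, $1\le a\le n_{ij}^{st}$) from $v_i^s$ to $v_j^t$. *)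

theory Defs
  imports Main
begin

definition is_path :: "'e set \<Rightarrow> ('e \<Rightarrow> 'v) \<Rightarrow> ('e \<Rightarrow> 'v) \<Rightarrow> 'e list \<Rightarrow> bool" where
  "is_path E src rng p \<longleftrightarrow> p \<noteq> [] \<and> set p \<subseteq> E \<and>
     (\<forall>q. Suc q < length p \<longrightarrow> rng (p ! q) = src (p ! Suc q))"

definition path_from_to :: "'e set \<Rightarrow> ('e \<Rightarrow> 'v) \<Rightarrow> ('e \<Rightarrow> 'v) \<Rightarrow> 'e list \<Rightarrow> 'v \<Rightarrow> 'v \<Rightarrow> bool" where
  "path_from_to E src rng p u w \<longleftrightarrow> is_path E src rng p \<and> src (hd p) = u \<and> rng (last p) = w"

definition interior_vertices :: "('e \<Rightarrow> 'v) \<Rightarrow> 'e list \<Rightarrow> 'v set" where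
  "interior_vertices rng p = rng ` set (butlast p)"

text \<open>Vertex (v_i,k) is the pair (i,k) with i \<le> n, k < r.
Edge (e_{ij},k) is the triple (i,j,k) with i \<le> j \<le> n, k < r.\<close>

definition Lam_vertices :: "nat \<Rightarrow> nat \<Rightarrow> (nat \<times> nat) set" where
  "Lam_vertices n r = {(i, k). i \<le> n \<and> k < r}"

definition Lam_edges :: "nat \<Rightarrow> nat \<Rightarrow> (nat \<times> nat \<times> nat) set" where
  "Lam_edges n r = {(i, j, k). i \<le> j \<and> j \<le> n \<and> k < r}"

definition Lam_src :: "nat \<Rightarrow> (nat \<Rightarrow> nat) \<Rightarrow> nat \<times> nat \<times> nat \<Rightarrow> nat \<times> nat" where
  "Lam_src r m e = (case e of (i, j, k) \<Rightarrow> (i, nat ((int k - int (m i)) mod int r)))"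

definition Lam_rng :: "nat \<times> nat \<times> nat \<Rightarrow> nat \<times> nat" where
  "Lam_rng e = (case e of (i, j, k) \<Rightarrow> (j, k))"

definition forbidden :: "nat \<Rightarrow> (nat \<Rightarrow> nat) \<Rightarrow> nat \<Rightarrow> nat \<Rightarrow> (nat \<times> nat) set" where
  "forbidden r m i j = {(l, k). i \<le> l \<and> l \<le> j \<and> k < gcd (m l) r}"

definition admissible :: "nat \<Rightarrow> nat \<Rightarrow> (nat \<Rightarrow> nat) \<Rightarrow> nat \<Rightarrow> nat \<Rightarrow> nat \<Rightarrow> nat \<Rightarrow>
    (nat \<times> nat \<times> nat) list \<Rightarrow> bool" where
  "admissible n r m i j s t p \<longleftrightarrow>
     path_from_to (Lam_edges n r) (Lam_src r m) Lam_rng p (i, s) (j, t) \<and>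
     interior_vertices Lam_rng p \<inter> forbidden r m i j = {}"

definition n_adm :: "nat \<Rightarrow> nat \<Rightarrow> (nat \<Rightarrow> nat) \<Rightarrow> nat \<Rightarrow> nat \<Rightarrow> nat \<Rightarrow> nat \<Rightarrow> nat" where
  "n_adm n r m i j s t = card {p. admissible n r m i j s t p}"

definition hereditary :: "nat \<Rightarrow> nat \<Rightarrow> (nat \<Rightarrow> nat) \<Rightarrow> (nat \<times> nat) set \<Rightarrow> bool" where
  "hereditary n r m X \<longleftrightarrow> X \<subseteq> Lam_vertices n r \<and>
     (\<forall>e \<in> Lam_edges n r. Lam_src r m e \<in> X \<longrightarrow> Lam_rng e \<in> X)"

definition H_set :: "nat \<Rightarrow> nat \<Rightarrow> (nat \<Rightarrow> nat) \<Rightarrow> (nat \<times> nat) set" where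
  "H_set n r m = \<Inter> {X. hereditary n r m X \<and> {(i, 0) | i. i \<le> n} \<subseteq> X}"

definition S_set :: "nat \<Rightarrow> nat \<Rightarrow> (nat \<Rightarrow> nat) \<Rightarrow> nat \<Rightarrow> nat set" where
  "S_set n r m i = {k. k < gcd (m i) r \<and> (i, k) \<in> H_set n r m}"

text \<open>Vertex v_i^k is (i,k) with k \<in> S_i. Edge e_{ij;a}^{st} is (i,j,s,t,a)
from v_i^s to v_j^t.\<close>

definition Lbar_vertices :: "nat \<Rightarrow> nat \<Rightarrow> (nat \<Rightarrow> nat) \<Rightarrow> (nat \<times> nat) set" where
  "Lbar_vertices n r m = {(i, k). i \<le> n \<and> k \<in> S_set n r m i}"

definition Lbar_edges :: "nat \<Rightarrow> nat \<Rightarrow> (nat \<Rightarrow> nat) \<Rightarrow> (nat \<times> nat \<times> nat \<times> nat \<times> nat) set" where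
  "Lbar_edges n r m = {(i, j, s, t, a). i \<le> j \<and> j \<le> n \<and> s \<in> S_set n r m i \<and>
      t \<in> S_set n r m j \<and> 1 \<le> a \<and> a \<le> n_adm n r m i j s t}"

definition Lbar_src :: "nat \<times> nat \<times> nat \<times> nat \<times> nat \<Rightarrow> nat \<times> nat" where
  "Lbar_src e = (case e of (i, j, s, t, a) \<Rightarrow> (i, s))"

definition Lbar_rng :: "nat \<times> nat \<times> nat \<times> nat \<times> nat \<Rightarrow> nat \<times> nat" where
  "Lbar_rng e = (case e of (i, j, s, t, a) \<Rightarrow> (j, t))"

end

theory Submission
  imports Defs
begin


lemma path_single: "e \<in> E \<Longrightarrow> path_from_to E s t [e] (s e) (t e)"
  by (simp add: path_from_to_def is_path_def)

lemma path_snoc: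
  assumes "path_from_to E s t p a b" "e \<in> E" "s e = b"
  shows "path_from_to E s t (p @ [e]) a (t e)"
proof -
  have ne: "p \<noteq> []" and sub: "set p \<subseteq> E" and ch: "\<And>q. Suc q < length p \<Longrightarrow> t (p ! q) = s (p ! Suc q)"
    and h: "s (hd p) = a" and l: "t (last p) = b"
    using assms(1) by (auto simp: path_from_to_def is_path_def)
  have "t ((p @ [e]) ! q) = s ((p @ [e]) ! Suc q)" if "Suc q < length (p @ [e])" for q
  proof (cases "Suc q < length p")
    case True then show ?thesis using ch[OF True] by (simp add: nth_append)
  next
    case False
    then have "Suc q = length p" using that by simp
    then have "p ! q = last p" using ne by (metis diff_Suc_1 last_conv_nth)
    then show ?thesis using \<open>Suc q = length p\<close> l assms(3) by (simp add: nth_append)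
  qed
  then show ?thesis using ne sub h assms by (auto simp: path_from_to_def is_path_def)
qed

lemma path_snoc_dest:
  assumes "path_from_to E s t (p @ [e]) a b" "p \<noteq> []"
  shows "path_from_to E s t p a (t (last p)) \<and> e \<in> E \<and> s e = t (last p) \<and> b = t e"
proof -
  have sub: "set (p@[e]) \<subseteq> E" and ch: "\<And>q. Suc q < length (p@[e]) \<Longrightarrow> t ((p@[e]) ! q) = s ((p@[e]) ! Suc q)"
    and h: "s (hd (p@[e])) = a" and l: "t (last (p@[e])) = b"
    using assms(1) by (auto simp: path_from_to_def is_path_def)
  have c1: "t (p ! q) = s (p ! Suc q)" if "Suc q < length p" for q
    using ch[of q] that by (simp add: nth_append)
  have "t ((p@[e]) ! (length p - 1)) = s ((p@[e]) ! Suc (length p - 1))"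
    using ch[of "length p - 1"] assms(2) by simp
  then have "t (last p) = s e" using assms(2) by (simp add: nth_append last_conv_nth)
  then show ?thesis using assms(2) sub h l c1 by (auto simp: path_from_to_def is_path_def)
qed

lemma interior_snoc: "p \<noteq> [] \<Longrightarrow> interior_vertices t (p @ [e]) = interior_vertices t p \<union> {t (last p)}"
proof -
  assume "p \<noteq> []"
  then have "p = butlast p @ [last p]" by simp
  then have "set p = set (butlast p) \<union> {last p}" by (metis Un_commute empty_set list.simps(15) set_append insert_is_Un)
  then show ?thesis by (simp add: interior_vertices_def)
qed

lemma interior_single: "interior_vertices t [e] = {}"
  by (simp add: interior_vertices_def)

lemma bezout_mod:
  fixes x m r :: nat assumes "r \<ge> 1"
  shows "\<exists>j. (x + j * m) mod r < gcd m r"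
proof (cases "m = 0")
  case True then show ?thesis using assms by (intro exI[of _ 0]) simp
next
  case False
  obtain u v where uv: "m * u = r * v + gcd m r" using bezout_nat[OF False] by blast
  define g where "g = gcd m r"
  have gpos: "g > 0" using assms by (simp add: g_def)
  have gle: "g \<le> r" using assms by (simp add: g_def gcd_le2_nat)
  define q where "q = x div g"
  define \<rho> where "\<rho> = x mod g"
  have x: "x = g * q + \<rho>" by (simp add: q_def \<rho>_def)
  have rho: "\<rho> < g" using gpos by (simp add: \<rho>_def)
  obtain r' where r': "r = Suc r'" using assms by (cases r) auto
  have "x + (u * q * r') * m = \<rho> + r * (q * g + q * r' * v)"
  proof -
    have "(u * q * r') * m = q * r' * (m * u)" by (simp add: algebra_simps)
    also have "\<dots> = q * r' * (r * v + g)" using uv g_def by simp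
    finally show ?thesis using x r' by (simp add: algebra_simps)
  qed
  then have "(x + (u * q * r') * m) mod r = \<rho>" using rho gle by simp
  then show ?thesis using rho g_def by metis
qed


lemma edge_facts:
  assumes "e \<in> Lam_edges n r"
  shows "\<exists>i j k. e = (i, j, k) \<and> i \<le> j \<and> j \<le> n \<and> k < r \<and>
     Lam_src r m e = (i, nat ((int k - int (m i)) mod int r)) \<and> Lam_rng e = (j, k)"
  using assms by (auto simp: Lam_edges_def Lam_src_def Lam_rng_def)

lemma edge_level: "e \<in> Lam_edges n r \<Longrightarrow> fst (Lam_src r m e) \<le> fst (Lam_rng e)"
  using edge_facts[of e n r m] by auto

lemma rng_vert: "e \<in> Lam_edges n r \<Longrightarrow> Lam_rng e \<in> Lam_vertices n r"
  by (auto simp: Lam_edges_def Lam_rng_def Lam_vertices_def)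

lemma lev_step:
  assumes "is_path (Lam_edges n r) (Lam_src r m) Lam_rng p" "Suc q < length p"
  shows "fst (Lam_rng (p ! q)) \<le> fst (Lam_rng (p ! Suc q))"
proof -
  have "p ! Suc q \<in> Lam_edges n r" using assms by (auto simp: is_path_def)
  moreover have "Lam_rng (p ! q) = Lam_src r m (p ! Suc q)" using assms by (auto simp: is_path_def)
  ultimately show ?thesis using edge_level by metis
qed

lemma lev_mono:
  assumes "is_path (Lam_edges n r) (Lam_src r m) Lam_rng p" "q \<le> q'" "q' < length p"
  shows "fst (Lam_rng (p ! q)) \<le> fst (Lam_rng (p ! q'))"
  using assms(2,3)
proof (induction q')
  case 0 then show ?case by simp
next
  case (Suc x)
  show ?case
  proof (cases "q = Suc x")
    case True then show ?thesis by simp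
  next
    case False
    then have "fst (Lam_rng (p ! q)) \<le> fst (Lam_rng (p ! x))" using Suc by simp
    also have "\<dots> \<le> fst (Lam_rng (p ! Suc x))" using lev_step[OF assms(1)] Suc by simp
    finally show ?thesis .
  qed
qed

lemma lev_first:
  assumes "is_path (Lam_edges n r) (Lam_src r m) Lam_rng p"
  shows "fst (Lam_src r m (hd p)) \<le> fst (Lam_rng (p ! 0))"
proof -
  have "p \<noteq> []" "set p \<subseteq> Lam_edges n r" using assms by (auto simp: is_path_def)
  then have "hd p \<in> Lam_edges n r" "hd p = p ! 0" by (auto simp: hd_conv_nth)
  then show ?thesis using edge_level by metis
qed

lemma path_level:
  assumes "path_from_to (Lam_edges n r) (Lam_src r m) Lam_rng p u w"
  shows "fst u \<le> fst w"
proof -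
  have ip: "is_path (Lam_edges n r) (Lam_src r m) Lam_rng p" and ne: "p \<noteq> []"
    and "Lam_src r m (hd p) = u" "Lam_rng (last p) = w"
    using assms by (auto simp: path_from_to_def is_path_def)
  moreover have "last p = p ! (length p - 1)" using ne by (simp add: last_conv_nth)
  moreover have "fst (Lam_rng (p ! 0)) \<le> fst (Lam_rng (p ! (length p - 1)))"
    using lev_mono[OF ip] ne by simp
  ultimately show ?thesis using lev_first[OF ip] by auto
qed


lemma no_repeat:
  assumes adm: "admissible n r m i j s t p" and r: "r \<ge> 1"
    and ab: "a < b" "b < length p - 1" and eq: "Lam_rng (p ! a) = Lam_rng (p ! b)"
  shows False
proof -
  define V where "V q = Lam_rng (p ! q)" for q
  have ip: "is_path (Lam_edges n r) (Lam_src r m) Lam_rng p" and ne: "p \<noteq> []"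
    and hd: "Lam_src r m (hd p) = (i, s)" and lst: "Lam_rng (last p) = (j, t)"
    and int: "interior_vertices Lam_rng p \<inter> forbidden r m i j = {}"
    using adm by (auto simp: admissible_def path_from_to_def is_path_def)
  have sub: "set p \<subseteq> Lam_edges n r" and ch: "\<And>q. Suc q < length p \<Longrightarrow> Lam_rng (p ! q) = Lam_src r m (p ! Suc q)"
    using ip by (auto simp: is_path_def)
  define l where "l = fst (V a)"
  define k0 where "k0 = snd (V a)"
  define M where "M = m l"
  have lev: "fst (V q) = l" if "a \<le> q" "q \<le> b" for q
  proof -
    have "fst (V a) \<le> fst (V q)" "fst (V q) \<le> fst (V b)" using lev_mono[OF ip] that ab by (auto simp: V_def)
    then show ?thesis using eq by (simp add: V_def l_def)
  qed
  have k0r: "k0 < r"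
  proof -
    have "p ! a \<in> Lam_edges n r" using sub ab by auto
    then have "V a \<in> Lam_vertices n r" using rng_vert by (simp add: V_def)
    then show ?thesis by (cases "V a") (simp add: k0_def Lam_vertices_def)
  qed
  have seq: "snd (V (a + c)) = (k0 + c * M) mod r" if "c \<le> b - a" for c
    using that
  proof (induction c)
    case 0 then show ?case using k0r by (simp add: k0_def)
  next
    case (Suc c)
    have ins: "Suc (a + c) < length p" using Suc ab by simp
    then have "p ! Suc (a + c) \<in> Lam_edges n r" using sub by auto
    then obtain i' j' k' where e: "p ! Suc (a + c) = (i', j', k')" "k' < r"
      "Lam_src r m (p ! Suc (a + c)) = (i', nat ((int k' - int (m i')) mod int r))"
      "Lam_rng (p ! Suc (a + c)) = (j', k')"
      using edge_facts[of "p ! Suc (a + c)" n r m] by blast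
    have "V (a + c) = Lam_src r m (p ! Suc (a + c))" using ch[OF ins] by (simp add: V_def)
    moreover have "fst (V (a + c)) = l" "fst (V (Suc (a + c))) = l" using lev Suc by auto
    ultimately have i': "i' = l" and kk: "nat ((int k' - int M) mod int r) = (k0 + c * M) mod r"
      using e Suc by (auto simp: V_def M_def)
    have "(int k' - int M) mod int r = int ((k0 + c * M) mod r)"
      using kk r by (metis Euclidean_Rings.pos_mod_sign int_nat_eq less_le_trans of_nat_0_less_iff zero_less_one)
    then have "int k' mod int r = (int ((k0 + c * M) mod r) + int M) mod int r"
      by (metis diff_add_cancel mod_add_left_eq)
    then have "int k' mod int r = int ((k0 + Suc c * M) mod r)"
      by (simp add: zmod_int mod_add_right_eq algebra_simps)
    then have "int (k' mod r) = int ((k0 + Suc c * M) mod r)" by (subst zmod_int) assumption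
    then have "k' mod r = (k0 + Suc c * M) mod r" by (simp only: of_nat_eq_iff)
    then have "k' = (k0 + Suc c * M) mod r" using e(2) by simp
    then show ?case using e by (simp add: V_def)
  qed
  have k0eq: "k0 = (k0 + (b - a) * M) mod r" using seq[of "b - a"] ab eq by (simp add: V_def k0_def)
  then have dv: "r dvd (b - a) * M"
  proof -
    have "(k0 + (b - a) * M) mod r = k0 mod r" using k0eq k0r by simp
    then have "r dvd (k0 + (b - a) * M) - k0" using mod_eq_dvd_iff_nat[of k0 "k0 + (b - a) * M" r] by simp
    then show ?thesis by simp
  qed
  obtain jj where jj: "(k0 + jj * M) mod r < gcd M r" using bezout_mod[OF r] by blast
  define c where "c = jj mod (b - a)"
  have cl: "c < b - a" using ab by (simp add: c_def)
  have "(k0 + jj * M) mod r = (k0 + c * M) mod r"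
  proof -
    obtain d where d: "(b - a) * M = r * d" using dv by blast
    define q where "q = jj div (b - a)"
    have hjj: "jj = c + q * (b - a)" using mod_div_mult_eq[of jj "b - a"] by (simp add: c_def q_def)
    have "jj * M = (c + q * (b - a)) * M" using hjj by (rule arg_cong[where f="\<lambda>x. x * M"])
    also have "\<dots> = c * M + q * ((b - a) * M)" by (simp add: algebra_simps)
    also have "\<dots> = c * M + r * (q * d)" using d by simp
    finally have "jj * M = c * M + r * (q * d)" .
    then show ?thesis by (simp add: add.assoc[symmetric])
  qed
  then have small: "snd (V (a + c)) < gcd (m l) r" using seq[of c] cl jj by (simp add: M_def)
  have inI: "V (a + c) \<in> interior_vertices Lam_rng p"
  proof -
    have "a + c < length (butlast p)" using cl ab by simp
    then have "butlast p ! (a + c) \<in> set (butlast p)" by (rule nth_mem)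
    moreover have "butlast p ! (a + c) = p ! (a + c)" using cl ab by (simp add: nth_butlast)
    ultimately show ?thesis by (force simp: interior_vertices_def V_def)
  qed
  have il: "i \<le> l"
  proof -
    have "fst (Lam_src r m (hd p)) \<le> fst (V 0)" using lev_first[OF ip] by (simp add: V_def)
    also have "\<dots> \<le> fst (V a)" using lev_mono[OF ip, of 0 a] ab by (simp add: V_def)
    finally show ?thesis using hd by (simp add: l_def)
  qed
  have lj: "l \<le> j"
  proof -
    have "fst (V b) \<le> fst (V (length p - 1))" using lev_mono[OF ip, of b "length p - 1"] ab by (simp add: V_def)
    moreover have "last p = p ! (length p - 1)" using ne by (simp add: last_conv_nth)
    ultimately show ?thesis using lst eq by (simp add: l_def V_def)
  qed
  have "V (a + c) \<in> forbidden r m i j"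
    using il lj small lev[of "a + c"] cl by (cases "V (a + c)") (auto simp: forbidden_def)
  then show False using inI int by blast
qed


lemma adm_distinct:
  assumes "admissible n r m i j s t p" "r \<ge> 1"
  shows "distinct (map Lam_rng (butlast p))"
proof -
  have "map Lam_rng (butlast p) ! a \<noteq> map Lam_rng (butlast p) ! b"
    if "a < length (butlast p)" "b < length (butlast p)" "a \<noteq> b" for a b
  proof
    assume h: "map Lam_rng (butlast p) ! a = map Lam_rng (butlast p) ! b"
    then have h': "Lam_rng (p ! a) = Lam_rng (p ! b)" using that by (simp add: nth_butlast)
    show False
    proof (cases "a < b")
      case True then show ?thesis using no_repeat[OF assms(1) assms(2) True _ h'] that by simp
    next
      case False then have "b < a" using that by simp
      then show ?thesis using no_repeat[OF assms(1) assms(2) \<open>b < a\<close> _ h'[symmetric]] that by simp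
    qed
  qed
  then show ?thesis by (simp add: distinct_conv_nth)
qed

lemma finite_Lam_vertices: "finite (Lam_vertices n r)"
proof -
  have "Lam_vertices n r \<subseteq> {..n} \<times> {..<r}" by (auto simp: Lam_vertices_def)
  then show ?thesis by (rule finite_subset) simp
qed

lemma finite_Lam_edges: "finite (Lam_edges n r)"
proof -
  have "Lam_edges n r \<subseteq> {..n} \<times> {..n} \<times> {..<r}" by (auto simp: Lam_edges_def)
  then show ?thesis by (rule finite_subset) simp
qed

lemma adm_finite:
  assumes "r \<ge> 1"
  shows "finite {p. admissible n r m i j s t p}"
proof -
  let ?N = "card (Lam_vertices n r) + 1"
  have "{p. admissible n r m i j s t p} \<subseteq> {xs. set xs \<subseteq> Lam_edges n r \<and> length xs \<le> ?N}"
  proof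
    fix p assume "p \<in> {p. admissible n r m i j s t p}"
    then have adm: "admissible n r m i j s t p" by simp
    then have sub: "set p \<subseteq> Lam_edges n r"
      by (auto simp: admissible_def path_from_to_def is_path_def)
    have d: "distinct (map Lam_rng (butlast p))" using adm_distinct[OF adm assms] .
    have "set (map Lam_rng (butlast p)) \<subseteq> Lam_vertices n r"
      using sub rng_vert by (auto dest: in_set_butlastD)
    then have "card (set (map Lam_rng (butlast p))) \<le> card (Lam_vertices n r)"
      using finite_Lam_vertices by (rule card_mono[rotated])
    then have "length (butlast p) \<le> card (Lam_vertices n r)" using distinct_card[OF d] by simp
    then show "p \<in> {xs. set xs \<subseteq> Lam_edges n r \<and> length xs \<le> ?N}" using sub by simp
  qed
  then show ?thesis using finite_lists_length_le[OF finite_Lam_edges] by (rule finite_subset)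
qed

lemma n_adm_pos:
  assumes "admissible n r m i j s t p" "r \<ge> 1"
  shows "n_adm n r m i j s t \<ge> 1"
proof -
  have "card {p. admissible n r m i j s t p} > 0"
    using adm_finite[OF assms(2)] assms(1) by (auto simp: card_gt_0_iff)
  then show ?thesis by (simp add: n_adm_def)
qed

lemma Lbar_edge:
  assumes "admissible n r m i j s t p" "r \<ge> 1" "s \<in> S_set n r m i" "t \<in> S_set n r m j"
  shows "(i, j, s, t, 1) \<in> Lbar_edges n r m"
proof -
  have pf: "path_from_to (Lam_edges n r) (Lam_src r m) Lam_rng p (i, s) (j, t)"
    using assms(1) by (simp add: admissible_def)
  have "i \<le> j" using path_level[OF pf] by simp
  moreover have "j \<le> n"
  proof -
    have "p \<noteq> []" "set p \<subseteq> Lam_edges n r" "Lam_rng (last p) = (j, t)"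
      using pf by (auto simp: path_from_to_def is_path_def)
    then have "(j, t) \<in> Lam_vertices n r" using rng_vert by (metis last_in_set subsetD)
    then show ?thesis by (simp add: Lam_vertices_def)
  qed
  ultimately show ?thesis using n_adm_pos[OF assms(1,2)] assms(3,4) by (simp add: Lbar_edges_def)
qed

lemma H_hered:
  assumes "r \<ge> 1"
  shows "hereditary n r m (H_set n r m)" and "\<And>l. l \<le> n \<Longrightarrow> (l, 0) \<in> H_set n r m"
proof -
  have V: "hereditary n r m (Lam_vertices n r) \<and> {(i, 0) | i. i \<le> n} \<subseteq> Lam_vertices n r"
    using assms rng_vert by (auto simp: hereditary_def Lam_vertices_def)
  have "H_set n r m \<subseteq> Lam_vertices n r" unfolding H_set_def using V by blast
  moreover have "\<forall>e \<in> Lam_edges n r. Lam_src r m e \<in> H_set n r m \<longrightarrow> Lam_rng e \<in> H_set n r m"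
    unfolding H_set_def hereditary_def by blast
  ultimately show "hereditary n r m (H_set n r m)" by (simp add: hereditary_def)
  show "(l, 0) \<in> H_set n r m" if "l \<le> n" for l
    unfolding H_set_def using that by blast
qed

lemma H_path:
  assumes "r \<ge> 1" "path_from_to (Lam_edges n r) (Lam_src r m) Lam_rng p u w" "u \<in> H_set n r m"
  shows "w \<in> H_set n r m"
  using assms(2)
proof (induction p arbitrary: w rule: rev_induct)
  case Nil then show ?case by (simp add: path_from_to_def is_path_def)
next
  case (snoc e p)
  have her: "\<forall>e \<in> Lam_edges n r. Lam_src r m e \<in> H_set n r m \<longrightarrow> Lam_rng e \<in> H_set n r m"
    using H_hered(1)[OF assms(1)] by (simp add: hereditary_def)
  show ?case
  proof (cases "p = []")
    case True
    then have "e \<in> Lam_edges n r" "Lam_src r m e = u" "Lam_rng e = w"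
      using snoc.prems by (auto simp: path_from_to_def is_path_def)
    then show ?thesis using her assms(3) by auto
  next
    case False
    from path_snoc_dest[OF snoc.prems False] snoc.IH her show ?thesis by auto
  qed
qed


definition RS :: "nat \<Rightarrow> nat \<Rightarrow> (nat \<Rightarrow> nat) \<Rightarrow> (nat \<times> nat) set" where
  "RS n r m = {w. \<exists>p. path_from_to (Lam_edges n r) (Lam_src r m) Lam_rng p (0, 0) w}"

lemma RS_ext:
  assumes "Lam_src r m e = (0, 0) \<or> Lam_src r m e \<in> RS n r m" "e \<in> Lam_edges n r"
  shows "Lam_rng e \<in> RS n r m"
proof (cases "Lam_src r m e = (0, 0)")
  case True
  then show ?thesis using path_single[OF assms(2), of "Lam_src r m" Lam_rng] unfolding RS_def by auto
next
  case False
  then obtain p where "path_from_to (Lam_edges n r) (Lam_src r m) Lam_rng p (0, 0) (Lam_src r m e)"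
    using assms(1) unfolding RS_def by auto
  from path_snoc[OF this assms(2) refl] show ?thesis unfolding RS_def by auto
qed

lemma RS_loops:
  assumes "r \<ge> 1"
  shows "(0, (j * m 0) mod r) = (0, 0) \<or> (0, (j * m 0) mod r) \<in> RS n r m"
proof (induction j)
  case 0 then show ?case by simp
next
  case (Suc j)
  define e where "e = (0::nat, 0::nat, (Suc j * m 0) mod r)"
  have eE: "e \<in> Lam_edges n r" using assms by (simp add: e_def Lam_edges_def)
  have "int ((Suc j * m 0) mod r) = (int (j * m 0) + int (m 0)) mod int r"
    by (simp add: zmod_int algebra_simps)
  then have "(int ((Suc j * m 0) mod r) - int (m 0)) mod int r = (int (j * m 0) + int (m 0) - int (m 0)) mod int r"
    by (simp add: mod_diff_left_eq)
  also have "\<dots> = int ((j * m 0) mod r)" by (simp add: zmod_int)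
  finally have "Lam_src r m e = (0, (j * m 0) mod r)"
    by (simp add: e_def Lam_src_def)
  then have "Lam_src r m e = (0, 0) \<or> Lam_src r m e \<in> RS n r m" using Suc.IH by simp
  then have "Lam_rng e \<in> RS n r m" using RS_ext[OF _ eE] by blast
  then show ?case by (simp add: e_def Lam_rng_def)
qed

lemma RS_base:
  assumes "r \<ge> 1" "l \<le> n"
  shows "(l, 0) \<in> RS n r m"
proof -
  define e where "e = (0::nat, l, 0::nat)"
  have eE: "e \<in> Lam_edges n r" using assms by (simp add: e_def Lam_edges_def)
  have "int ((r - 1) * m 0) = int r * int (m 0) - int (m 0)" using assms by (simp add: of_nat_diff algebra_simps)
  then have "int (((r - 1) * m 0) mod r) = (int r * int (m 0) - int (m 0)) mod int r" by (simp add: zmod_int)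
  also have "\<dots> = (0 - int (m 0)) mod int r"
    using mod_diff_left_eq[of "int r * int (m 0)" "int r" "int (m 0)"] by simp
  finally have "Lam_src r m e = (0, ((r - 1) * m 0) mod r)"
    by (simp add: e_def Lam_src_def)
  then have "Lam_src r m e = (0, 0) \<or> Lam_src r m e \<in> RS n r m"
    using RS_loops[OF assms(1), where j="r - 1" and n=n and m=m] by simp
  then have "Lam_rng e \<in> RS n r m" using RS_ext[OF _ eE] by blast
  then show ?thesis by (simp add: e_def Lam_rng_def)
qed

lemma H_RS:
  assumes "r \<ge> 1"
  shows "H_set n r m \<subseteq> RS n r m"
proof -
  have "RS n r m \<subseteq> Lam_vertices n r"
  proof
    fix w assume "w \<in> RS n r m"
    then obtain p where "path_from_to (Lam_edges n r) (Lam_src r m) Lam_rng p (0, 0) w" by (auto simp: RS_def)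
    then have "p \<noteq> []" "set p \<subseteq> Lam_edges n r" "Lam_rng (last p) = w"
      by (auto simp: path_from_to_def is_path_def)
    then show "w \<in> Lam_vertices n r" using rng_vert by (metis last_in_set subsetD)
  qed
  then have "hereditary n r m (RS n r m)" using RS_ext by (auto simp: hereditary_def)
  moreover have "{(i, 0) | i. i \<le> n} \<subseteq> RS n r m" using RS_base[OF assms] by auto
  ultimately show ?thesis unfolding H_set_def by blast
qed

definition Reach0 :: "nat \<Rightarrow> nat \<Rightarrow> (nat \<Rightarrow> nat) \<Rightarrow> nat \<times> nat \<Rightarrow> bool" where
  "Reach0 n r m v \<longleftrightarrow> v = (0, 0) \<or> (\<exists>P. path_from_to (Lbar_edges n r m) Lbar_src Lbar_rng P (0, 0) v)"

lemma reach_step: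
  assumes "r \<ge> 1" "Reach0 n r m (i, s)" "admissible n r m i j s t p"
    "s \<in> S_set n r m i" "t \<in> S_set n r m j"
  shows "\<exists>P. path_from_to (Lbar_edges n r m) Lbar_src Lbar_rng P (0, 0) (j, t)"
proof -
  have eE: "(i, j, s, t, 1) \<in> Lbar_edges n r m" using Lbar_edge[OF assms(3,1,4,5)] .
  have s: "Lbar_src (i, j, s, t, 1) = (i, s)" and t: "Lbar_rng (i, j, s, t, 1) = (j, t)"
    by (simp_all add: Lbar_src_def Lbar_rng_def)
  show ?thesis
  proof (cases "(i, s) = (0, 0)")
    case True
    then show ?thesis using path_single[OF eE, of Lbar_src Lbar_rng] s t by metis
  next
    case False
    then obtain P where "path_from_to (Lbar_edges n r m) Lbar_src Lbar_rng P (0, 0) (i, s)"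
      using assms(2) by (auto simp: Reach0_def)
    then show ?thesis using path_snoc[OF _ eE, of Lbar_src Lbar_rng P "(0,0)"] s t by metis
  qed
qed

lemma forb_sub: "forbidden r m i j \<subseteq> {(l, k). k < gcd (m l) r}"
  by (auto simp: forbidden_def)

lemma mainQ:
  assumes r: "r \<ge> 1" and "path_from_to (Lam_edges n r) (Lam_src r m) Lam_rng p (0, 0) w"
  shows "\<exists>v p'. snd v < gcd (m (fst v)) r \<and> v \<in> H_set n r m \<and> Reach0 n r m v \<and>
     path_from_to (Lam_edges n r) (Lam_src r m) Lam_rng p' v w \<and>
     interior_vertices Lam_rng p' \<inter> {(l, k). k < gcd (m l) r} = {}"
  using assms(2)
proof (induction p arbitrary: w rule: rev_induct)
  case Nil then show ?case by (simp add: path_from_to_def is_path_def)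
next
  case (snoc e p)
  let ?B = "{(l, k). k < gcd (m l) r}"
  have H0: "(0, 0) \<in> H_set n r m" using H_hered(2)[OF r, of 0] by simp
  show ?case
  proof (cases "p = []")
    case True
    then have eE: "e \<in> Lam_edges n r" and "Lam_src r m e = (0, 0)" "Lam_rng e = w"
      using snoc.prems by (auto simp: path_from_to_def is_path_def)
    then have "path_from_to (Lam_edges n r) (Lam_src r m) Lam_rng [e] (0, 0) w"
      using path_single[OF eE, of "Lam_src r m" Lam_rng] by simp
    moreover have "snd (0::nat, 0::nat) < gcd (m (fst (0::nat, 0::nat))) r" using r by simp
    ultimately show ?thesis using H0 interior_single[of Lam_rng e]
      by (intro exI[of _ "(0, 0)"] exI[of _ "[e]"]) (simp add: Reach0_def)
  next
    case False
    let ?w0 = "Lam_rng (last p)"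
    have pp: "path_from_to (Lam_edges n r) (Lam_src r m) Lam_rng p (0, 0) ?w0"
      and eE: "e \<in> Lam_edges n r" and se: "Lam_src r m e = ?w0" and we: "w = Lam_rng e"
      using path_snoc_dest[OF snoc.prems False] by auto
    obtain v p' where v: "snd v < gcd (m (fst v)) r" "v \<in> H_set n r m" "Reach0 n r m v"
      and p': "path_from_to (Lam_edges n r) (Lam_src r m) Lam_rng p' v ?w0"
      and ip': "interior_vertices Lam_rng p' \<inter> ?B = {}"
      using snoc.IH[OF pp] by blast
    have w0H: "?w0 \<in> H_set n r m" using H_path[OF r pp H0] .
    show ?thesis
    proof (cases "?w0 \<in> ?B")
      case True
      obtain a b where ab: "?w0 = (a, b)" by (cases ?w0)
      have adm: "admissible n r m (fst v) a (snd v) b p'"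
        using p' ip' forb_sub[of r m "fst v" a] ab by (auto simp: admissible_def)
      have Sv: "snd v \<in> S_set n r m (fst v)" using v by (simp add: S_set_def)
      have Sw: "b \<in> S_set n r m a" using True w0H ab by (simp add: S_set_def)
      have "Reach0 n r m ?w0"
        using reach_step[OF r _ adm Sv Sw] v(3) ab by (simp add: Reach0_def)
      moreover have "path_from_to (Lam_edges n r) (Lam_src r m) Lam_rng [e] ?w0 w"
        using path_single[OF eE, of "Lam_src r m" Lam_rng] se we by simp
      ultimately show ?thesis using True w0H interior_single[of Lam_rng e] ab
        by (intro exI[of _ ?w0] exI[of _ "[e]"]) simp
    next
      case False
      have p'ne: "p' \<noteq> []" using p' by (simp add: path_from_to_def is_path_def)
      have lp': "Lam_rng (last p') = ?w0" using p' by (simp add: path_from_to_def)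
      have "path_from_to (Lam_edges n r) (Lam_src r m) Lam_rng (p' @ [e]) v w"
        using path_snoc[OF p' eE se] we by simp
      moreover have "interior_vertices Lam_rng (p' @ [e]) \<inter> ?B = {}"
        using interior_snoc[OF p'ne, of Lam_rng e] ip' False lp' by auto
      ultimately show ?thesis using v by blast
    qed
  qed
qed

theorem lemma3p10:
  fixes n r :: nat and m :: "nat \<Rightarrow> nat"
  assumes "n \<ge> 1" and "r \<ge> 1" and "\<forall>l \<le> n. m l \<ge> 1"
  shows "\<forall>i \<le> n. \<forall>k \<in> S_set n r m i. \<exists>p.
           path_from_to (Lbar_edges n r m) Lbar_src Lbar_rng p (0, 0) (i, k)"
proof (intro allI impI ballI)
  fix i k assume i: "i \<le> n" and k: "k \<in> S_set n r m i"
  then have "(i, k) \<in> H_set n r m" by (simp add: S_set_def)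
  then have "(i, k) \<in> RS n r m" using H_RS[OF assms(2)] by blast
  then obtain p where "path_from_to (Lam_edges n r) (Lam_src r m) Lam_rng p (0, 0) (i, k)"
    by (auto simp: RS_def)
  from mainQ[OF assms(2) this] obtain v p' where
    v: "snd v < gcd (m (fst v)) r" "v \<in> H_set n r m" "Reach0 n r m v"
    and p': "path_from_to (Lam_edges n r) (Lam_src r m) Lam_rng p' v (i, k)"
    and ip': "interior_vertices Lam_rng p' \<inter> {(l, k). k < gcd (m l) r} = {}" by blast
  have adm: "admissible n r m (fst v) i (snd v) k p'"
    using p' ip' forb_sub[of r m "fst v" i] by (auto simp: admissible_def)
  have Sv: "snd v \<in> S_set n r m (fst v)" using v by (simp add: S_set_def)
  show "\<exists>p. path_from_to (Lbar_edges n r m) Lbar_src Lbar_rng p (0, 0) (i, k)"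
    using reach_step[OF assms(2) _ adm Sv k] v(3) by simp
qed

end
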